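(* Let $n\equiv 3\pmod 4$ with $n>3$. Let $1\le r\le m$, let $M_r\in\mathfrak{C}_r$, and suppose $\det\tilde M_r>0$. Let $E_m^*\in\mathfrak{E}_m$ satisfy $\det E_m^*=\max\{\det E: E\in\mathfrak{E}_m\}$, and write $$E_m^*=\begin{bmatrix}M_r & B\\ B^T & A\end{bmatrix}$$ with $A=(a_{ij})$ of order $m-r$ and $B$ of size $r\times(m-r)$. If $a_{ij}=3$ for some $i\neq j$, then columns $i$ and $j$ of $B$ are equal, and columns $i$ and $j$ of $A$ are equal except for their $i$-th and $j$-th entries.
   Context: Fix an integer $n\equiv 3\pmod 4$, $n>3$. For $m\ge1$, $\mathfrak{C}_m$ is the set of symmetric positive definite $m\times m$ integer matrices $C=(c_{ij})$ with $c_{ii}=n$ and $c_{ij}\equiv n\pmod 4$ for all $i,j$. Given a fixed $M_r\in\mathfrak{C}_r$, for $m\ge r$, $\mathfrak{E}_m$ is the set of $E_m\in\mathfrak{C}_m$ whose leading $r\times r$ submatrix is $M_r$. For a square matrix $C$ of order $m$, $\tilde C$ denotes the matrix obtained from $C$ by replacing its $(m,m)$ entry by $3$. *)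

theory Defs
  imports "Jordan_Normal_Form.Determinant"
begin

definition pos_def_int :: "nat \<Rightarrow> int mat \<Rightarrow> bool" where
  "pos_def_int m C \<longleftrightarrow> C \<in> carrier_mat m m \<and> C\<^sup>T = C \<and>
     (\<forall>x :: real vec. x \<in> carrier_vec m \<and> x \<noteq> 0\<^sub>v m \<longrightarrow>
        scalar_prod x (map_mat real_of_int C *\<^sub>v x) > 0)"

definition frakC :: "int \<Rightarrow> nat \<Rightarrow> int mat set" where
  "frakC n m = {C. pos_def_int m C \<and> (\<forall>i<m. C $$ (i,i) = n) \<and>
                   (\<forall>i<m. \<forall>j<m. C $$ (i,j) mod 4 = n mod 4)}"

definition frakE :: "int \<Rightarrow> int mat \<Rightarrow> nat \<Rightarrow> int mat set" where
  "frakE n M m = {E \<in> frakC n m. \<forall>i<dim_row M. \<forall>j<dim_row M. E $$ (i,j) = M $$ (i,j)}"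

definition tilde :: "int mat \<Rightarrow> int mat" where
  "tilde C = mat (dim_row C) (dim_col C)
     (\<lambda>(i,j). if i = dim_row C - 1 \<and> j = dim_col C - 1 then 3 else C $$ (i,j))"

end

theory Submission
  imports Defs
begin



definition vcons :: "'a vec \<Rightarrow> 'a \<Rightarrow> 'a vec" where
  "vcons z \<tau> = vec (Suc (dim_vec z)) (\<lambda>a. if a < dim_vec z then z$a else \<tau>)"

definition ext :: "'a mat \<Rightarrow> 'a vec \<Rightarrow> 'a \<Rightarrow> 'a mat" where
  "ext F x \<alpha> = mat (Suc (dim_row F)) (Suc (dim_row F)) (\<lambda>(a,b).
     if a < dim_row F \<and> b < dim_row F then F$$(a,b) else if a < dim_row F then x$a
     else if b < dim_row F then x$b else \<alpha>)"

lemma vcons_carrier[simp]: "z \<in> carrier_vec t \<Longrightarrow> vcons z \<tau> \<in> carrier_vec (Suc t)"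
  and vcons_dim[simp]: "dim_vec (vcons z \<tau>) = Suc (dim_vec z)"
  by (auto simp: vcons_def)

lemma vcons_index: "a < Suc (dim_vec z) \<Longrightarrow> vcons z \<tau> $ a = (if a < dim_vec z then z$a else \<tau>)"
  by (simp add: vcons_def)

lemma vcons_index_lt[simp]: "a < dim_vec z \<Longrightarrow> vcons z \<tau> $ a = z$a"
  and vcons_index_last[simp]: "vcons z \<tau> $ dim_vec z = \<tau>"
  by (auto simp: vcons_def)

lemma ext_carrier[simp]: "F \<in> carrier_mat t t \<Longrightarrow> ext F x \<alpha> \<in> carrier_mat (Suc t) (Suc t)"
  by (auto simp: ext_def)

lemma ext_dims[simp]: "dim_row (ext F x \<alpha>) = Suc (dim_row F)" "dim_col (ext F x \<alpha>) = Suc (dim_row F)"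
  by (auto simp: ext_def)

lemma ext_index: "a < Suc (dim_row F) \<Longrightarrow> b < Suc (dim_row F) \<Longrightarrow> ext F x \<alpha> $$ (a,b) =
  (if a < dim_row F \<and> b < dim_row F then F$$(a,b) else if a < dim_row F then x$a
     else if b < dim_row F then x$b else \<alpha>)"
  by (simp add: ext_def)

lemma scalar_prod_vcons:
  fixes z w :: "'a::comm_ring_1 vec"
  assumes "z \<in> carrier_vec t" "w \<in> carrier_vec t"
  shows "vcons z \<tau> \<bullet> vcons w \<sigma> = z \<bullet> w + \<tau> * \<sigma>"
  using assms unfolding scalar_prod_def
  by (simp add: sum.atLeast0_lessThan_Suc vcons_def)

lemma ext_mult_vcons:
  fixes F :: "'a::comm_ring_1 mat"
  assumes F: "F \<in> carrier_mat t t" and x: "x \<in> carrier_vec t" and z: "z \<in> carrier_vec t"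
  shows "ext F x \<alpha> *\<^sub>v vcons z \<tau> = vcons (F *\<^sub>v z + \<tau> \<cdot>\<^sub>v x) (x \<bullet> z + \<alpha> * \<tau>)"
proof (rule eq_vecI)
  show "dim_vec (ext F x \<alpha> *\<^sub>v vcons z \<tau>) = dim_vec (vcons (F *\<^sub>v z + \<tau> \<cdot>\<^sub>v x) (x \<bullet> z + \<alpha> * \<tau>))"
    using F x by simp
  fix a assume a: "a < dim_vec (vcons (F *\<^sub>v z + \<tau> \<cdot>\<^sub>v x) (x \<bullet> z + \<alpha> * \<tau>))"
  hence a': "a < Suc t" using F x by simp
  have "(ext F x \<alpha> *\<^sub>v vcons z \<tau>) $ a = (\<Sum>c<Suc t. ext F x \<alpha> $$ (a,c) * vcons z \<tau> $ c)"
    using F z a' by (simp add: scalar_prod_def row_def atLeast0LessThan)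
  also have "\<dots> = (\<Sum>c<t. ext F x \<alpha> $$ (a,c) * z $ c) + ext F x \<alpha> $$ (a,t) * \<tau>"
    using F z by (simp add: vcons_index)
  finally have eq: "(ext F x \<alpha> *\<^sub>v vcons z \<tau>) $ a = (\<Sum>c<t. ext F x \<alpha> $$ (a,c) * z $ c) + ext F x \<alpha> $$ (a,t) * \<tau>" .
  show "(ext F x \<alpha> *\<^sub>v vcons z \<tau>) $ a = vcons (F *\<^sub>v z + \<tau> \<cdot>\<^sub>v x) (x \<bullet> z + \<alpha> * \<tau>) $ a"
  proof (cases "a < t")
    case True
    then show ?thesis unfolding eq using F x z a'
      by (simp add: ext_index vcons_index scalar_prod_def row_def atLeast0LessThan mult.commute)
  next
    case False
    hence "a = t" using a' by simp
    then show ?thesis unfolding eq using F x z a'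
      by (simp add: ext_index vcons_index scalar_prod_def row_def atLeast0LessThan mult.commute)
  qed
qed

lemma det_ext:
  fixes F :: "'a::comm_ring_1 mat"
  assumes F: "F \<in> carrier_mat t t" and y: "y \<in> carrier_vec t" and x: "F *\<^sub>v y = x"
  shows "det (ext F x \<alpha>) = det F * (\<alpha> - x \<bullet> y)"
proof -
  have xc: "x \<in> carrier_vec t" using x F y mult_mat_vec_carrier by blast
  define U :: "'a mat" where "U = mat (Suc t) (Suc t) (\<lambda>(a,b). if a = b then 1 else if b = t then - y$a else 0)"
  have U: "U \<in> carrier_mat (Suc t) (Suc t)" unfolding U_def by auto
  have ut: "upper_triangular U" unfolding U_def upper_triangular_def by auto
  have "diag_mat U = map (\<lambda>i. 1) [0..<Suc t]" unfolding diag_mat_def U_def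
    by (intro map_cong, auto)
  also have "\<dots> = replicate (Suc t) 1" by (simp add: map_replicate_const)
  finally have "diag_mat U = replicate (Suc t) 1" .
  hence detU: "det U = 1" using det_upper_triangular[OF ut U] by simp
  define K where "K = ext F x \<alpha> * U"
  have K: "K \<in> carrier_mat (Suc t) (Suc t)" unfolding K_def by (rule mult_carrier_mat[OF ext_carrier[OF F] U])
  have Kent: "K $$ (a,b) = (if b < t then ext F x \<alpha> $$ (a,b) else if a < t then 0 else \<alpha> - x \<bullet> y)"
    if a: "a < Suc t" and b: "b < Suc t" for a b
  proof -
    have "K $$ (a,b) = (\<Sum>c<Suc t. ext F x \<alpha> $$ (a,c) * U $$ (c,b))"
      unfolding K_def using a b F U by (simp add: scalar_prod_def row_def col_def atLeast0LessThan)
    also have "\<dots> = (\<Sum>c<t. ext F x \<alpha> $$ (a,c) * U $$ (c,b)) + ext F x \<alpha> $$ (a,t) * U $$ (t,b)"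
      by simp
    also have "\<dots> = (if b < t then ext F x \<alpha> $$ (a,b) else if a < t then 0 else \<alpha> - x \<bullet> y)"
    proof (cases "b < t")
      case True
      have "(\<Sum>c<t. ext F x \<alpha> $$ (a,c) * U $$ (c,b)) = (\<Sum>c<t. if c = b then ext F x \<alpha> $$ (a,c) else 0)"
        by (rule sum.cong, insert True, auto simp: U_def)
      also have "\<dots> = ext F x \<alpha> $$ (a,b)" using True by simp
      finally show ?thesis using True by (simp add: U_def)
    next
      case False
      hence bt: "b = t" using b by simp
      have s1: "(\<Sum>c<t. ext F x \<alpha> $$ (a,c) * U $$ (c,b)) = - (\<Sum>c<t. ext F x \<alpha> $$ (a,c) * y $ c)"
        unfolding bt by (simp add: U_def sum_negf[symmetric])
      show ?thesis
      proof (cases "a < t")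
        case True
        have "(F *\<^sub>v y) $ a = (\<Sum>c<t. F $$ (a,c) * y $ c)"
          using True F y by (simp add: scalar_prod_def row_def atLeast0LessThan)
        hence "(\<Sum>c<t. ext F x \<alpha> $$ (a,c) * y $ c) = x $ a"
          using True F x by (simp add: ext_index)
        thus ?thesis unfolding s1 using True bt F by (simp add: ext_index U_def)
      next
        case False
        hence at: "a = t" using a by simp
        have "(\<Sum>c<t. ext F x \<alpha> $$ (a,c) * y $ c) = x \<bullet> y"
          using F xc y at by (simp add: ext_index scalar_prod_def atLeast0LessThan)
        thus ?thesis unfolding s1 using False bt F at by (simp add: ext_index U_def)
      qed
    qed
    finally show ?thesis .
  qed
  have md: "mat_delete K t t = F"
    by (rule eq_matI, insert F K, auto simp: mat_delete_def Kent ext_index)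
  hence cof: "cofactor K t t = det F" unfolding cofactor_def by simp
  have Ktt: "K $$ (t,t) = \<alpha> - x \<bullet> y" by (simp add: Kent)
  have "det K = (\<Sum>i<Suc t. K $$ (i,t) * cofactor K i t)"
    by (rule laplace_expansion_column[OF K], simp)
  also have "\<dots> = K $$ (t,t) * cofactor K t t"
  proof -
    have "(\<Sum>i<Suc t. K $$ (i,t) * cofactor K i t) = (\<Sum>i<t. K $$ (i,t) * cofactor K i t) + K $$ (t,t) * cofactor K t t"
      by simp
    moreover have "(\<Sum>i<t. K $$ (i,t) * cofactor K i t) = 0"
      by (rule sum.neutral, auto simp: Kent)
    ultimately show ?thesis by simp
  qed
  finally have "det K = (\<alpha> - x \<bullet> y) * det F" unfolding cof Ktt .
  moreover have "det K = det (ext F x \<alpha>)" unfolding K_def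
    using det_mult[OF ext_carrier[OF F] U] detU by simp
  ultimately show ?thesis by (simp add: mult.commute)
qed

definition lead :: "'a mat \<Rightarrow> 'a mat" where
  "lead A = mat (dim_row A - 1) (dim_row A - 1) (\<lambda>(a,b). A $$ (a,b))"
definition lastc :: "'a mat \<Rightarrow> 'a vec" where
  "lastc A = vec (dim_row A - 1) (\<lambda>a. A $$ (a, dim_row A - 1))"

lemma lead_carrier[simp]: "A \<in> carrier_mat (Suc t) (Suc t) \<Longrightarrow> lead A \<in> carrier_mat t t"
  by (auto simp: lead_def)
lemma lastc_carrier[simp]: "A \<in> carrier_mat (Suc t) (Suc t) \<Longrightarrow> lastc A \<in> carrier_vec t"
  by (auto simp: lastc_def)
lemma lead_index: "A \<in> carrier_mat (Suc t) (Suc t) \<Longrightarrow> a < t \<Longrightarrow> b < t \<Longrightarrow> lead A $$ (a,b) = A $$ (a,b)"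
  by (auto simp: lead_def)
lemma lastc_index: "A \<in> carrier_mat (Suc t) (Suc t) \<Longrightarrow> a < t \<Longrightarrow> lastc A $ a = A $$ (a,t)"
  by (auto simp: lastc_def)

lemma ext_decomp:
  assumes A: "A \<in> carrier_mat (Suc t) (Suc t)" and sym: "\<And>a b. a < Suc t \<Longrightarrow> b < Suc t \<Longrightarrow> A $$ (a,b) = A $$ (b,a)"
  shows "A = ext (lead A) (lastc A) (A $$ (t,t))"
  by (rule eq_matI, insert A sym, auto simp: ext_index lead_def lastc_def less_Suc_eq)

lemma lead_ext[simp]: "F \<in> carrier_mat t t \<Longrightarrow> lead (ext F x \<alpha>) = F"
  by (rule eq_matI, auto simp: lead_def ext_index)

lemma lastc_ext[simp]: "F \<in> carrier_mat t t \<Longrightarrow> x \<in> carrier_vec t \<Longrightarrow> lastc (ext F x \<alpha>) = x"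
  by (rule eq_vecI, auto simp: lastc_def ext_index)

lemma ext_transpose: assumes F: "F \<in> carrier_mat t t" and s: "F\<^sup>T = F"
  shows "(ext F x \<alpha>)\<^sup>T = ext F x \<alpha>"
proof (rule eq_matI)
  fix a b assume a: "a < dim_row (ext F x \<alpha>)" and b: "b < dim_col (ext F x \<alpha>)"
  have fs: "F $$ (b,a) = F $$ (a,b)" if "a < t" "b < t"
  proof -
    have "F\<^sup>T $$ (a,b) = F $$ (b,a)" using that F by simp
    thus ?thesis using s by simp
  qed
  show "(ext F x \<alpha>)\<^sup>T $$ (a, b) = ext F x \<alpha> $$ (a, b)"
    using a b F fs by (simp add: ext_index)
qed auto

lemma vcons_split: "x \<in> carrier_vec (Suc t) \<Longrightarrow> x = vcons (vec t (\<lambda>a. x $ a)) (x $ t)"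
  by (rule eq_vecI, auto simp: vcons_def less_Suc_eq)

lemma vcons_zero: assumes z: "z \<in> carrier_vec t" shows "(vcons z \<tau> = 0\<^sub>v (Suc t)) = (z = 0\<^sub>v t \<and> \<tau> = 0)"
proof
  assume h: "vcons z \<tau> = 0\<^sub>v (Suc t)"
  have "\<tau> = 0" using arg_cong[OF h, of "\<lambda>v. v $ t"] z by (simp add: vcons_def)
  moreover have "z = 0\<^sub>v t"
  proof (rule eq_vecI)
    fix a assume "a < dim_vec (0\<^sub>v t :: 'a vec)"
    hence a: "a < t" by simp
    show "z $ a = 0\<^sub>v t $ a" using arg_cong[OF h, of "\<lambda>v. v $ a"] z a by (simp add: vcons_def)
  qed (use z in simp)
  ultimately show "z = 0\<^sub>v t \<and> \<tau> = 0" by simp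
next
  assume "z = 0\<^sub>v t \<and> \<tau> = 0"
  thus "vcons z \<tau> = 0\<^sub>v (Suc t)" by (intro eq_vecI, auto simp: vcons_def)
qed

lemma sym_scalar:
  fixes A :: "'a::comm_ring_1 mat"
  assumes A: "A \<in> carrier_mat t t" and s: "A\<^sup>T = A" and a: "a \<in> carrier_vec t" and b: "b \<in> carrier_vec t"
  shows "(A *\<^sub>v a) \<bullet> b = a \<bullet> (A *\<^sub>v b)"
  using transpose_vec_mult_scalar[OF A b a] s by simp

definition pdr :: "nat \<Rightarrow> real mat \<Rightarrow> bool" where
  "pdr t A \<longleftrightarrow> A \<in> carrier_mat t t \<and> A\<^sup>T = A \<and>
     (\<forall>x. x \<in> carrier_vec t \<and> x \<noteq> 0\<^sub>v t \<longrightarrow> x \<bullet> (A *\<^sub>v x) > 0)"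

lemma quad_ext:
  fixes F :: "real mat"
  assumes F: "F \<in> carrier_mat t t" and x: "x \<in> carrier_vec t" and z: "z \<in> carrier_vec t"
  shows "vcons z \<tau> \<bullet> (ext F x \<alpha> *\<^sub>v vcons z \<tau>) = z \<bullet> (F *\<^sub>v z) + 2 * \<tau> * (x \<bullet> z) + \<alpha> * \<tau> * \<tau>"
proof -
  have Fz: "F *\<^sub>v z \<in> carrier_vec t" using F z by simp
  have tx: "\<tau> \<cdot>\<^sub>v x \<in> carrier_vec t" using x by simp
  have "vcons z \<tau> \<bullet> (ext F x \<alpha> *\<^sub>v vcons z \<tau>) = z \<bullet> (F *\<^sub>v z + \<tau> \<cdot>\<^sub>v x) + \<tau> * (x \<bullet> z + \<alpha> * \<tau>)"
    unfolding ext_mult_vcons[OF F x z] using scalar_prod_vcons[OF z add_carrier_vec[OF Fz tx]] .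
  also have "z \<bullet> (F *\<^sub>v z + \<tau> \<cdot>\<^sub>v x) = z \<bullet> (F *\<^sub>v z) + z \<bullet> (\<tau> \<cdot>\<^sub>v x)"
    by (rule scalar_prod_add_distrib[OF z Fz tx])
  also have "z \<bullet> (\<tau> \<cdot>\<^sub>v x) = \<tau> * (x \<bullet> z)"
    using scalar_prod_smult_distrib[OF z x] comm_scalar_prod[OF x z] by simp
  finally show ?thesis by (simp add: algebra_simps)
qed

lemma quad_ext_shift:
  fixes F :: "real mat"
  assumes F: "F \<in> carrier_mat t t" and sym: "F\<^sup>T = F" and y: "y \<in> carrier_vec t" and x: "F *\<^sub>v y = x"
    and z: "z \<in> carrier_vec t"
  shows "vcons z \<tau> \<bullet> (ext F x \<alpha> *\<^sub>v vcons z \<tau>) = (z + \<tau> \<cdot>\<^sub>v y) \<bullet> (F *\<^sub>v (z + \<tau> \<cdot>\<^sub>v y)) + \<tau> * \<tau> * (\<alpha> - x \<bullet> y)"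
proof -
  have xc: "x \<in> carrier_vec t" using x F y mult_mat_vec_carrier by blast
  have ty: "\<tau> \<cdot>\<^sub>v y \<in> carrier_vec t" using y by simp
  have Fz: "F *\<^sub>v z \<in> carrier_vec t" using F z by simp
  have tx: "\<tau> \<cdot>\<^sub>v x \<in> carrier_vec t" using xc by simp
  have e1: "F *\<^sub>v (z + \<tau> \<cdot>\<^sub>v y) = F *\<^sub>v z + \<tau> \<cdot>\<^sub>v x"
    using mult_add_distrib_mat_vec[OF F z ty] mult_mat_vec[OF F y] x by simp
  have "(z + \<tau> \<cdot>\<^sub>v y) \<bullet> (F *\<^sub>v z + \<tau> \<cdot>\<^sub>v x) = z \<bullet> (F *\<^sub>v z + \<tau> \<cdot>\<^sub>v x) + (\<tau> \<cdot>\<^sub>v y) \<bullet> (F *\<^sub>v z + \<tau> \<cdot>\<^sub>v x)"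
    by (rule add_scalar_prod_distrib[OF z ty add_carrier_vec[OF Fz tx]])
  also have "z \<bullet> (F *\<^sub>v z + \<tau> \<cdot>\<^sub>v x) = z \<bullet> (F *\<^sub>v z) + \<tau> * (z \<bullet> x)"
    using scalar_prod_add_distrib[OF z Fz tx] scalar_prod_smult_distrib[OF z xc] by simp
  also have "(\<tau> \<cdot>\<^sub>v y) \<bullet> (F *\<^sub>v z + \<tau> \<cdot>\<^sub>v x) = \<tau> * (y \<bullet> (F *\<^sub>v z)) + \<tau> * \<tau> * (y \<bullet> x)"
    using scalar_prod_add_distrib[OF ty Fz tx] smult_scalar_prod_distrib[OF y Fz]
      smult_scalar_prod_distrib[OF y tx] scalar_prod_smult_distrib[OF y xc] by simp
  also have "y \<bullet> (F *\<^sub>v z) = x \<bullet> z" using sym_scalar[OF F sym y z] x by simp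
  finally have e2: "(z + \<tau> \<cdot>\<^sub>v y) \<bullet> (F *\<^sub>v (z + \<tau> \<cdot>\<^sub>v y)) = z \<bullet> (F *\<^sub>v z) + \<tau> * (z \<bullet> x) + (\<tau> * (x \<bullet> z) + \<tau> * \<tau> * (y \<bullet> x))"
    unfolding e1 .
  have c1: "z \<bullet> x = x \<bullet> z" by (rule comm_scalar_prod[OF z xc])
  have c2: "y \<bullet> x = x \<bullet> y" by (rule comm_scalar_prod[OF y xc])
  have ring: "\<And>A B C a t::real. A + 2*t*B + a*t*t = A + t*B + (t*B + t*t*C) + t*t*(a - C)"
    by (simp add: algebra_simps)
  show ?thesis unfolding quad_ext[OF F xc z] e2 c1 c2 by (rule ring)
qed


lemma pdr_sym: "pdr t A \<Longrightarrow> a < t \<Longrightarrow> b < t \<Longrightarrow> A $$ (a,b) = A $$ (b,a)"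
  unfolding pdr_def by (metis carrier_matD(1) carrier_matD(2) index_transpose_mat(1))

lemma pdr_nonneg: "pdr t A \<Longrightarrow> w \<in> carrier_vec t \<Longrightarrow> w \<bullet> (A *\<^sub>v w) \<ge> 0"
  unfolding pdr_def
  by (cases "w = 0\<^sub>v t", auto simp: less_imp_le)

lemma neg_plus_vec: "y \<in> carrier_vec t \<Longrightarrow> (-1::real) \<cdot>\<^sub>v y + 1 \<cdot>\<^sub>v y = 0\<^sub>v t"
  by (intro eq_vecI, auto)

lemma plus_zero_smult: "z \<in> carrier_vec t \<Longrightarrow> y \<in> carrier_vec t \<Longrightarrow> z + (0::real) \<cdot>\<^sub>v y = z"
  by (intro eq_vecI, auto)

lemma pdr_lead: assumes A: "pdr (Suc t) A" shows "pdr t (lead A)"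
proof -
  have Ac: "A \<in> carrier_mat (Suc t) (Suc t)" using A unfolding pdr_def by simp
  have dec: "A = ext (lead A) (lastc A) (A $$ (t,t))"
    by (rule ext_decomp[OF Ac], rule pdr_sym[OF A])
  have L: "lead A \<in> carrier_mat t t" using Ac by simp
  have T: "(lead A)\<^sup>T = lead A"
    by (rule eq_matI, insert Ac, auto simp: lead_def intro: pdr_sym[OF A])
  have P: "z \<bullet> (lead A *\<^sub>v z) > 0" if z: "z \<in> carrier_vec t" "z \<noteq> 0\<^sub>v t" for z
  proof -
    have v: "vcons z 0 \<in> carrier_vec (Suc t)" "vcons z 0 \<noteq> 0\<^sub>v (Suc t)" using z vcons_zero[OF z(1)] by auto
    have "vcons z 0 \<bullet> (A *\<^sub>v vcons z 0) > 0" using A v unfolding pdr_def by blast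
    also have "vcons z 0 \<bullet> (A *\<^sub>v vcons z 0) = z \<bullet> (lead A *\<^sub>v z)"
      by (subst dec, subst quad_ext[OF L lastc_carrier[OF Ac] z(1)], simp)
    finally show ?thesis .
  qed
  show ?thesis unfolding pdr_def using L T P by blast
qed

lemma pdr_solve: assumes F: "pdr t F" and x: "x \<in> carrier_vec t"
  shows "\<exists>y \<in> carrier_vec t. F *\<^sub>v y = x"
proof -
  have Fc: "F \<in> carrier_mat t t" using F unfolding pdr_def by simp
  have d: "det F \<noteq> 0"
  proof
    assume "det F = 0"
    then obtain v where v: "v \<in> carrier_vec t" "v \<noteq> 0\<^sub>v t" "F *\<^sub>v v = 0\<^sub>v t"
      using det_0_iff_vec_prod_zero_field[OF Fc] by blast
    hence "v \<bullet> (F *\<^sub>v v) > 0" using F unfolding pdr_def by blast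
    thus False using v scalar_prod_right_zero[OF v(1)] by simp
  qed
  define y where "y = (1 / det F) \<cdot>\<^sub>v (adj_mat F *\<^sub>v x)"
  have adjc: "adj_mat F \<in> carrier_mat t t" using adj_mat(1)[OF Fc] .
  have ax: "adj_mat F *\<^sub>v x \<in> carrier_vec t" using adjc x by simp
  have "F *\<^sub>v y = (1 / det F) \<cdot>\<^sub>v (F *\<^sub>v (adj_mat F *\<^sub>v x))"
    unfolding y_def by (rule mult_mat_vec[OF Fc ax])
  also have "F *\<^sub>v (adj_mat F *\<^sub>v x) = (F * adj_mat F) *\<^sub>v x"
    using Fc adjc x by simp
  also have "F * adj_mat F = det F \<cdot>\<^sub>m 1\<^sub>m t" by (rule adj_mat(2)[OF Fc])
  also have "(det F \<cdot>\<^sub>m 1\<^sub>m t) *\<^sub>v x = det F \<cdot>\<^sub>v x"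
    by (intro eq_vecI, insert x, auto)
  also have "(1 / det F) \<cdot>\<^sub>v (det F \<cdot>\<^sub>v x) = x" using d by (simp add: smult_smult_assoc)
  finally have "F *\<^sub>v y = x" .
  moreover have "y \<in> carrier_vec t" unfolding y_def using ax by simp
  ultimately show ?thesis by blast
qed

lemma pdr_schur_pos:
  assumes F: "pdr t F" and y: "y \<in> carrier_vec t" and Fy: "F *\<^sub>v y = x"
    and E: "pdr (Suc t) (ext F x \<alpha>)"
  shows "\<alpha> - x \<bullet> y > 0"
proof -
  have Fc: "F \<in> carrier_mat t t" and T: "F\<^sup>T = F" using F unfolding pdr_def by auto
  have z: "(-1) \<cdot>\<^sub>v y \<in> carrier_vec t" using y by simp
  have v: "vcons ((-1) \<cdot>\<^sub>v y) 1 \<in> carrier_vec (Suc t)" "vcons ((-1) \<cdot>\<^sub>v y) (1::real) \<noteq> 0\<^sub>v (Suc t)"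
    using z vcons_zero[OF z] by auto
  have "vcons ((-1) \<cdot>\<^sub>v y) 1 \<bullet> (ext F x \<alpha> *\<^sub>v vcons ((-1) \<cdot>\<^sub>v y) 1) > 0"
    using E v unfolding pdr_def by blast
  also have "vcons ((-1) \<cdot>\<^sub>v y) 1 \<bullet> (ext F x \<alpha> *\<^sub>v vcons ((-1) \<cdot>\<^sub>v y) 1) = \<alpha> - x \<bullet> y"
    unfolding quad_ext_shift[OF Fc T y Fy z] neg_plus_vec[OF y] using Fc by simp
  finally show ?thesis .
qed

lemma pdr_det_pos: "pdr t F \<Longrightarrow> det F > 0"
proof (induction t arbitrary: F)
  case 0
  hence "F \<in> carrier_mat 0 0" unfolding pdr_def by simp
  thus ?case by simp
next
  case (Suc t)
  have Fc: "F \<in> carrier_mat (Suc t) (Suc t)" using Suc.prems unfolding pdr_def by simp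
  have dec: "F = ext (lead F) (lastc F) (F $$ (t,t))"
    by (rule ext_decomp[OF Fc], rule pdr_sym[OF Suc.prems])
  have L: "pdr t (lead F)" by (rule pdr_lead[OF Suc.prems])
  obtain y where y: "y \<in> carrier_vec t" "lead F *\<^sub>v y = lastc F"
    using pdr_solve[OF L lastc_carrier[OF Fc]] by blast
  have "det F = det (lead F) * (F $$ (t,t) - lastc F \<bullet> y)"
    by (subst dec, rule det_ext[OF lead_carrier[OF Fc] y])
  moreover have "F $$ (t,t) - lastc F \<bullet> y > 0"
    by (rule pdr_schur_pos[OF L y(1) y(2)], subst dec[symmetric], rule Suc.prems)
  ultimately show ?case using Suc.IH[OF L] by simp
qed

lemma pdr_ext:
  assumes F: "pdr t F" and y: "y \<in> carrier_vec t" and Fy: "F *\<^sub>v y = x" and pos: "\<alpha> - x \<bullet> y > 0"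
  shows "pdr (Suc t) (ext F x \<alpha>)"
proof -
  have Fc: "F \<in> carrier_mat t t" and T: "F\<^sup>T = F" using F unfolding pdr_def by auto
  have P: "v \<bullet> (ext F x \<alpha> *\<^sub>v v) > 0" if v: "v \<in> carrier_vec (Suc t)" "v \<noteq> 0\<^sub>v (Suc t)" for v
  proof -
    define z where "z = vec t (\<lambda>a. v $ a)"
    define \<tau> where "\<tau> = v $ t"
    have z: "z \<in> carrier_vec t" unfolding z_def by simp
    have vd: "v = vcons z \<tau>" unfolding z_def \<tau>_def by (rule vcons_split[OF v(1)])
    have w: "z + \<tau> \<cdot>\<^sub>v y \<in> carrier_vec t" using z y by simp
    have q: "v \<bullet> (ext F x \<alpha> *\<^sub>v v) = (z + \<tau> \<cdot>\<^sub>v y) \<bullet> (F *\<^sub>v (z + \<tau> \<cdot>\<^sub>v y)) + \<tau> * \<tau> * (\<alpha> - x \<bullet> y)"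
      unfolding vd by (rule quad_ext_shift[OF Fc T y Fy z])
    show ?thesis
    proof (cases "\<tau> = 0")
      case True
      hence zn: "z \<noteq> 0\<^sub>v t" using v(2) vd vcons_zero[OF z] by simp
      have "z \<bullet> (F *\<^sub>v z) > 0" using F z zn unfolding pdr_def by blast
      thus ?thesis unfolding q using True plus_zero_smult[OF z y] by simp
    next
      case False
      have "\<tau> * \<tau> > 0" using False by (cases "\<tau> > 0") (auto simp: mult_neg_neg)
      hence "\<tau> * \<tau> * (\<alpha> - x \<bullet> y) > 0" using pos by simp
      moreover have "(z + \<tau> \<cdot>\<^sub>v y) \<bullet> (F *\<^sub>v (z + \<tau> \<cdot>\<^sub>v y)) \<ge> 0" by (rule pdr_nonneg[OF F w])
      ultimately show ?thesis unfolding q by simp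
    qed
  qed
  show ?thesis unfolding pdr_def using ext_carrier[OF Fc] ext_transpose[OF Fc T] P by blast
qed

lemma pdr_ext_det:
  assumes F: "pdr t F" and x: "x \<in> carrier_vec t" and d: "det (ext F x \<alpha>) > 0"
  shows "pdr (Suc t) (ext F x \<alpha>)"
proof -
  have Fc: "F \<in> carrier_mat t t" using F unfolding pdr_def by auto
  obtain y where y: "y \<in> carrier_vec t" "F *\<^sub>v y = x" using pdr_solve[OF F x] by blast
  have "det (ext F x \<alpha>) = det F * (\<alpha> - x \<bullet> y)" by (rule det_ext[OF Fc y])
  hence "\<alpha> - x \<bullet> y > 0" using d pdr_det_pos[OF F] by (simp add: zero_less_mult_iff)
  thus ?thesis by (rule pdr_ext[OF F y(1) y(2)])
qed


lemma det_ext2: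
  fixes G :: "real mat"
  assumes G: "G \<in> carrier_mat k k" and T: "G\<^sup>T = G"
    and hu: "hu \<in> carrier_vec k" and Gu: "G *\<^sub>v hu = u"
    and hw: "hw \<in> carrier_vec k" and Gw: "G *\<^sub>v hw = w"
    and p: "p = \<alpha> - u \<bullet> hu" and pnz: "p \<noteq> 0"
  shows "det (ext (ext G u \<alpha>) (vcons w \<gamma>) \<beta>) = det G * (p * (\<beta> - w \<bullet> hw) - (\<gamma> - u \<bullet> hw)^2)"
proof -
  have uc: "u \<in> carrier_vec k" using Gu G hu mult_mat_vec_carrier by blast
  have wc: "w \<in> carrier_vec k" using Gw G hw mult_mat_vec_carrier by blast
  define c where "c = u \<bullet> hw"
  define b where "b = w \<bullet> hw"
  define l where "l = (\<gamma> - c) / p"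
  define F where "F = ext G u \<alpha>"
  have Fc: "F \<in> carrier_mat (Suc k) (Suc k)" unfolding F_def using G by simp
  define h where "h = hw + (-l) \<cdot>\<^sub>v hu"
  have hc: "h \<in> carrier_vec k" unfolding h_def using hu hw by simp
  have lhu: "(-l) \<cdot>\<^sub>v hu \<in> carrier_vec k" using hu by simp
  have Gh: "G *\<^sub>v h = w + (-l) \<cdot>\<^sub>v u"
    unfolding h_def using mult_add_distrib_mat_vec[OF G hw lhu] mult_mat_vec[OF G hu] Gu Gw by simp
  have vec1: "w + (-l) \<cdot>\<^sub>v u + l \<cdot>\<^sub>v u = w" by (intro eq_vecI, insert wc uc, auto)
  have wu: "w \<bullet> hu = c"
  proof -
    have "w \<bullet> hu = (G *\<^sub>v hw) \<bullet> hu" using Gw by simp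
    also have "\<dots> = hw \<bullet> (G *\<^sub>v hu)" by (rule sym_scalar[OF G T hw hu])
    also have "\<dots> = hw \<bullet> u" using Gu by simp
    also have "\<dots> = c" unfolding c_def by (rule comm_scalar_prod[OF hw uc])
    finally show ?thesis .
  qed
  have uh: "u \<bullet> h = c - l * (u \<bullet> hu)"
    unfolding h_def c_def using scalar_prod_add_distrib[OF uc hw lhu] scalar_prod_smult_distrib[OF uc hu] by simp
  have wh: "w \<bullet> h = b - l * c"
    unfolding h_def b_def using scalar_prod_add_distrib[OF wc hw lhu] scalar_prod_smult_distrib[OF wc hu] wu by simp
  have cl: "c + l * p = \<gamma>" unfolding l_def using pnz by simp
  have Fy: "F *\<^sub>v vcons h l = vcons w \<gamma>"
    unfolding F_def ext_mult_vcons[OF G uc hc] Gh vec1 uh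
    using cl p by (simp add: algebra_simps)
  have yc: "vcons h l \<in> carrier_vec (Suc k)" using hc by simp
  have "det (ext F (vcons w \<gamma>) \<beta>) = det F * (\<beta> - vcons w \<gamma> \<bullet> vcons h l)"
    by (rule det_ext[OF Fc yc Fy])
  also have "vcons w \<gamma> \<bullet> vcons h l = b - l * c + \<gamma> * l"
    unfolding scalar_prod_vcons[OF wc hc] wh ..
  also have "det F = det G * (\<alpha> - u \<bullet> hu)" unfolding F_def by (rule det_ext[OF G hu Gu])
  finally have e1: "det (ext F (vcons w \<gamma>) \<beta>) = det G * p * (\<beta> - (b - l * c + \<gamma> * l))" unfolding p by simp
  have e2: "p * (\<beta> - (b - l * c + \<gamma> * l)) = p * (\<beta> - b) - (\<gamma> - c)^2"
    unfolding l_def using pnz by (simp add: field_simps power2_eq_square)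
  from e1 e2 have "det (ext F (vcons w \<gamma>) \<beta>) = det G * (p * (\<beta> - b) - (\<gamma> - c)^2)"
    by (simp add: mult.assoc)
  thus ?thesis unfolding F_def b_def c_def .
qed


section \<open>Integer level\<close>

abbreviation R :: "int mat \<Rightarrow> real mat" where "R A \<equiv> map_mat real_of_int A"

lemma det_R: "det (R A) = real_of_int (det A)"
  by (rule of_int_hom.hom_det)

lemma R_ext: assumes F: "F \<in> carrier_mat t t" and x: "x \<in> carrier_vec t"
  shows "R (ext F x \<alpha>) = ext (R F) (map_vec real_of_int x) (real_of_int \<alpha>)"
  by (rule eq_matI, insert F x, auto simp: ext_index)

lemma R_vcons: "map_vec real_of_int (vcons z \<tau>) = vcons (map_vec real_of_int z) (real_of_int \<tau>)"
  by (rule eq_vecI, auto simp: vcons_def)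

lemma R_lead: "A \<in> carrier_mat (Suc t) (Suc t) \<Longrightarrow> R (lead A) = lead (R A)"
  by (rule eq_matI, auto simp: lead_def)

lemma pos_def_int_iff: "pos_def_int t C \<longleftrightarrow> pdr t (R C)"
proof -
  have "C \<in> carrier_mat t t \<Longrightarrow> (C\<^sup>T = C) = ((R C)\<^sup>T = R C)"
  proof
    assume "C \<in> carrier_mat t t" "C\<^sup>T = C" thus "(R C)\<^sup>T = R C" by (metis map_mat_transpose)
  next
    assume C: "C \<in> carrier_mat t t" and h: "(R C)\<^sup>T = R C"
    show "C\<^sup>T = C"
    proof (rule eq_matI)
      fix a b assume ab: "a < dim_row C" "b < dim_col C"
      have "(R C)\<^sup>T $$ (a,b) = R C $$ (a,b)" using h by simp
      hence "real_of_int (C $$ (b,a)) = real_of_int (C $$ (a,b))" using ab C by auto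
      thus "C\<^sup>T $$ (a, b) = C $$ (a, b)" using ab C by auto
    qed (use C in auto)
  qed
  thus ?thesis unfolding pos_def_int_def pdr_def by auto
qed

lemma frakE_carrier: "E \<in> frakE n M t \<Longrightarrow> E \<in> carrier_mat t t"
  unfolding frakE_def frakC_def pos_def_int_def by auto

lemma frakE_pdr: "E \<in> frakE n M t \<Longrightarrow> pdr t (R E)"
  unfolding frakE_def frakC_def pos_def_int_iff by auto

lemma frakE_diag: "E \<in> frakE n M t \<Longrightarrow> a < t \<Longrightarrow> E $$ (a,a) = n"
  unfolding frakE_def frakC_def by auto

lemma frakE_mod: "E \<in> frakE n M t \<Longrightarrow> a < t \<Longrightarrow> b < t \<Longrightarrow> E $$ (a,b) mod 4 = n mod 4"
  unfolding frakE_def frakC_def by auto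

lemma frakE_M: "E \<in> frakE n M t \<Longrightarrow> a < dim_row M \<Longrightarrow> b < dim_row M \<Longrightarrow> E $$ (a,b) = M $$ (a,b)"
  unfolding frakE_def by auto

lemma frakE_sym: "E \<in> frakE n M t \<Longrightarrow> a < t \<Longrightarrow> b < t \<Longrightarrow> E $$ (a,b) = E $$ (b,a)"
proof -
  assume E: "E \<in> frakE n M t" and ab: "a < t" "b < t"
  have "real_of_int (E $$ (a,b)) = real_of_int (E $$ (b,a))"
    using pdr_sym[OF frakE_pdr[OF E] ab] frakE_carrier[OF E] ab by simp
  thus ?thesis by simp
qed

lemma frakE_decomp: assumes E: "E \<in> frakE n M (Suc t)"
  shows "E = ext (lead E) (lastc E) n"
proof -
  have Ec: "E \<in> carrier_mat (Suc t) (Suc t)" by (rule frakE_carrier[OF E])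
  have "E = ext (lead E) (lastc E) (E $$ (t,t))"
    by (rule ext_decomp[OF Ec], rule frakE_sym[OF E])
  thus ?thesis using frakE_diag[OF E, of t] by simp
qed

lemma frakE_lead: assumes E: "E \<in> frakE n M (Suc t)" and r: "dim_row M \<le> t"
  shows "lead E \<in> frakE n M t"
proof -
  have Ec: "E \<in> carrier_mat (Suc t) (Suc t)" by (rule frakE_carrier[OF E])
  have "pdr t (R (lead E))" unfolding R_lead[OF Ec] by (rule pdr_lead[OF frakE_pdr[OF E]])
  thus ?thesis using Ec r frakE_diag[OF E] frakE_mod[OF E] frakE_M[OF E]
    unfolding frakE_def frakC_def pos_def_int_iff by (auto simp: lead_index)
qed

lemma frakE_ext: assumes F: "F \<in> frakE n M t" and r: "dim_row M \<le> t"
  and x: "x \<in> carrier_vec t" and xm: "\<And>a. a < t \<Longrightarrow> x $ a mod 4 = n mod 4"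
  and P: "pdr (Suc t) (R (ext F x n))"
  shows "ext F x n \<in> frakE n M (Suc t)"
proof -
  have Fc: "F \<in> carrier_mat t t" by (rule frakE_carrier[OF F])
  show ?thesis using P Fc r x xm frakE_diag[OF F] frakE_mod[OF F] frakE_M[OF F]
    unfolding frakE_def frakC_def pos_def_int_iff by (auto simp: ext_index less_Suc_eq)
qed

lemma pdr_offdiag:
  assumes A: "pdr t A" and a: "a < t" and b: "b < t" and ab: "a \<noteq> b" and that: "\<sigma> = 1 \<or> \<sigma> = -1"
  shows "A $$ (a,a) + A $$ (b,b) + 2 * \<sigma> * A $$ (a,b) > 0"
proof -
  have Ac: "A \<in> carrier_mat t t" using A unfolding pdr_def by simp
  define x where "x = unit_vec t a + \<sigma> \<cdot>\<^sub>v unit_vec t b"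
  have xc: "x \<in> carrier_vec t" unfolding x_def by simp
  have xa: "x $ a = 1" unfolding x_def using a b ab by simp
  hence xn: "x \<noteq> 0\<^sub>v t" using a by auto
  have pos: "x \<bullet> (A *\<^sub>v x) > 0" using A xc xn unfolding pdr_def by blast
  have Ax: "A *\<^sub>v x = A *\<^sub>v unit_vec t a + \<sigma> \<cdot>\<^sub>v (A *\<^sub>v unit_vec t b)"
    unfolding x_def using mult_add_distrib_mat_vec[OF Ac, of "unit_vec t a" "\<sigma> \<cdot>\<^sub>v unit_vec t b"]
      mult_mat_vec[OF Ac, of "unit_vec t b" \<sigma>] by simp
  have Aij: "(A *\<^sub>v unit_vec t j) $ i = A $$ (i,j)" if "i < t" "j < t" for i j
    using that Ac by simp
  have c1: "A *\<^sub>v unit_vec t a \<in> carrier_vec t" "A *\<^sub>v unit_vec t b \<in> carrier_vec t" using Ac by auto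
  have "x \<bullet> (A *\<^sub>v x) = unit_vec t a \<bullet> (A *\<^sub>v x) + (\<sigma> \<cdot>\<^sub>v unit_vec t b) \<bullet> (A *\<^sub>v x)"
    unfolding x_def by (rule add_scalar_prod_distrib[of _ t], insert Ac, auto)
  also have "\<dots> = (A *\<^sub>v x) $ a + \<sigma> * (A *\<^sub>v x) $ b"
  proof -
    have Axc: "A *\<^sub>v x \<in> carrier_vec t" using Ac xc by simp
    show ?thesis using scalar_prod_left_unit[OF Axc a] scalar_prod_left_unit[OF Axc b]
      smult_scalar_prod_distrib[OF unit_vec_carrier Axc] by simp
  qed
  also have "\<dots> = A $$ (a,a) + \<sigma> * A $$ (a,b) + \<sigma> * (A $$ (b,a) + \<sigma> * A $$ (b,b))"
    unfolding Ax using a b Ac by simp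
  finally have "A $$ (a,a) + \<sigma> * A $$ (a,b) + \<sigma> * (A $$ (b,a) + \<sigma> * A $$ (b,b)) > 0" using pos by simp
  moreover have "A $$ (b,a) = A $$ (a,b)" using pdr_sym[OF A b a] .
  moreover have "\<sigma> * (\<sigma> * A $$ (b,b)) = A $$ (b,b)" using that by auto
  ultimately show ?thesis by (simp add: algebra_simps)
qed

lemma frakE_bound: assumes E: "E \<in> frakE n M t" and a: "a < t" and b: "b < t" and n: "n \<ge> 0"
  shows "\<bar>E $$ (a,b)\<bar> \<le> n"
proof (cases "a = b")
  case True thus ?thesis using frakE_diag[OF E a] n by simp
next
  case False
  have P: "pdr t (R E)" by (rule frakE_pdr[OF E])
  have Ec: "E \<in> carrier_mat t t" by (rule frakE_carrier[OF E])
  have d: "R E $$ (a,a) = n" "R E $$ (b,b) = n" using frakE_diag[OF E] a b Ec by auto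
  have "real_of_int n + n + 2 * 1 * R E $$ (a,b) > 0" using pdr_offdiag[OF P a b False, of 1] d by simp
  moreover have "real_of_int n + n + 2 * (-1) * R E $$ (a,b) > 0" using pdr_offdiag[OF P a b False, of "-1"] d by simp
  ultimately show ?thesis using a b Ec by auto
qed

lemma finite_bounded_mats: "finite {E :: int mat. E \<in> carrier_mat t t \<and> (\<forall>a<t. \<forall>b<t. \<bar>E $$ (a,b)\<bar> \<le> N)}"
proof -
  let ?I = "{..<t} \<times> {..<t}"
  have "{E :: int mat. E \<in> carrier_mat t t \<and> (\<forall>a<t. \<forall>b<t. \<bar>E $$ (a,b)\<bar> \<le> N)}
    \<subseteq> (\<lambda>f. mat t t f) ` (PiE ?I (\<lambda>_. {-N..N}))"
  proof
    fix E :: "int mat" assume "E \<in> {E. E \<in> carrier_mat t t \<and> (\<forall>a<t. \<forall>b<t. \<bar>E $$ (a,b)\<bar> \<le> N)}"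
    hence E: "E \<in> carrier_mat t t" and bd: "\<forall>a<t. \<forall>b<t. \<bar>E $$ (a,b)\<bar> \<le> N" by auto
    have "E = mat t t (restrict (\<lambda>p. E $$ p) ?I)"
      by (rule eq_matI, insert E, auto)
    moreover have "restrict (\<lambda>p. E $$ p) ?I \<in> PiE ?I (\<lambda>_. {-N..N})"
      using bd by (force simp: abs_le_iff)
    ultimately show "E \<in> (\<lambda>f. mat t t f) ` (PiE ?I (\<lambda>_. {-N..N}))" by blast
  qed
  moreover have "finite (PiE ?I (\<lambda>_. {-N..N::int}))" by (intro finite_PiE, auto)
  ultimately show ?thesis by (metis (no_types, lifting) finite_imageI finite_subset)
qed

lemma frakE_finite: assumes n: "n \<ge> 0" shows "finite (frakE n M t)"
proof -
  have "frakE n M t \<subseteq> {E :: int mat. E \<in> carrier_mat t t \<and> (\<forall>a<t. \<forall>b<t. \<bar>E $$ (a,b)\<bar> \<le> n)}"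
    using frakE_carrier frakE_bound n by blast
  thus ?thesis using finite_bounded_mats finite_subset by blast
qed


abbreviation RV :: "int vec \<Rightarrow> real vec" where "RV v \<equiv> map_vec real_of_int v"

lemma copy_ext:
  assumes n4: "n mod 4 = 3" and n3: "n > 3" and F: "F \<in> frakE n M (Suc k)" and r: "dim_row M \<le> Suc k"
    and big: "det F > (n-3) * det (lead F)"
  shows "\<exists>E' \<in> frakE n M (Suc (Suc k)). det E' > (n-3) * det F"
proof -
  define G where "G = lead F"
  define c where "c = lastc F"
  have Fc: "F \<in> carrier_mat (Suc k) (Suc k)" by (rule frakE_carrier[OF F])
  have Gc: "G \<in> carrier_mat k k" unfolding G_def using Fc by simp
  have cc: "c \<in> carrier_vec k" unfolding c_def using Fc by simp
  have Fd: "F = ext G c n" unfolding G_def c_def by (rule frakE_decomp[OF F])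
  have PF: "pdr (Suc k) (R F)" by (rule frakE_pdr[OF F])
  have PG: "pdr k (R G)" unfolding G_def R_lead[OF Fc] by (rule pdr_lead[OF PF])
  have RGc: "R G \<in> carrier_mat k k" using Gc by simp
  have TG: "(R G)\<^sup>T = R G" using PG unfolding pdr_def by simp
  have Rcc: "RV c \<in> carrier_vec k" using cc by simp
  obtain h where h: "h \<in> carrier_vec k" "R G *\<^sub>v h = RV c" using pdr_solve[OF PG Rcc] by blast
  define a where "a = RV c \<bullet> h"
  define p where "p = real_of_int n - a"
  define s where "s = real_of_int n - 3"
  have RF: "R F = ext (R G) (RV c) (real_of_int n)" unfolding Fd by (rule R_ext[OF Gc cc])
  have dF: "det (R F) = det (R G) * p" unfolding RF p_def a_def by (rule det_ext[OF RGc h])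
  have dGp: "det (R G) > 0" by (rule pdr_det_pos[OF PG])
  have dFp: "det (R F) > 0" by (rule pdr_det_pos[OF PF])
  have pp: "p > 0" using dF dGp dFp by (simp add: zero_less_mult_iff)
  define E' where "E' = ext F (vcons c 3) n"
  have xc: "vcons c 3 \<in> carrier_vec (Suc k)" using cc by simp
  have RE': "R E' = ext (ext (R G) (RV c) (real_of_int n)) (vcons (RV c) 3) (real_of_int n)"
    unfolding E'_def R_ext[OF Fc xc] RF R_vcons by simp
  have dE': "det (R E') = det (R G) * (p * (real_of_int n - RV c \<bullet> h) - (3 - RV c \<bullet> h)^2)"
    unfolding RE' by (rule det_ext2[OF RGc TG h h p_def[unfolded a_def]], use pp in simp)
  have bigR: "det (R F) > s * det (R G)" using big unfolding det_R s_def G_def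
    by (metis of_int_less_iff of_int_mult of_int_diff of_int_numeral)
  hence ps: "p > s" using dF dGp by (simp add: mult.commute)
  have e1: "RV c \<bullet> h = s + 3 - p" using p_def a_def s_def by simp
  have e2: "real_of_int n = s + 3" using s_def by simp
  have "det (R E') - s * det (R F) = det (R G) * (s * (p - s))"
    unfolding dE' dF e1 e2 by (simp add: algebra_simps power2_eq_square)
  moreover have "det (R G) * (s * (p - s)) > 0" using dGp ps n3 s_def by simp
  ultimately have gt: "det (R E') > s * det (R F)" by simp
  have s0: "s > 0" using n3 s_def by simp
  have d0: "det (R E') > 0" using gt s0 dFp by (smt (verit) mult_pos_pos)
  have PE': "pdr (Suc (Suc k)) (R E')"
    unfolding E'_def R_ext[OF Fc xc]
    by (rule pdr_ext_det[OF PF _ d0[unfolded E'_def R_ext[OF Fc xc]]], use xc in simp)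
  have mem: "E' \<in> frakE n M (Suc (Suc k))" unfolding E'_def
  proof (rule frakE_ext[OF F r xc])
    fix a assume "a < Suc k"
    thus "vcons c 3 $ a mod 4 = n mod 4"
      using frakE_mod[OF F, of a k] cc n4 by (auto simp: vcons_def c_def lastc_index[OF Fc] less_Suc_eq)
  next
    show "pdr (Suc (Suc k)) (R (ext F (vcons c 3) n))" using PE' unfolding E'_def .
  qed
  have "det E' > (n-3) * det F" using gt unfolding det_R s_def
    by (metis of_int_less_iff of_int_mult of_int_diff of_int_numeral)
  thus ?thesis using mem by blast
qed


definition opt :: "int \<Rightarrow> int mat \<Rightarrow> nat \<Rightarrow> int" where
  "opt n M t = Max (det ` frakE n M t)"

lemma frakC_carrier: "M \<in> frakC n r \<Longrightarrow> M \<in> carrier_mat r r"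
  unfolding frakC_def pos_def_int_def by auto

lemma frakE_base: assumes M: "M \<in> frakC n r" shows "frakE n M r = {M}"
proof -
  have Mc: "M \<in> carrier_mat r r" by (rule frakC_carrier[OF M])
  have "M \<in> frakE n M r" using M unfolding frakE_def by auto
  moreover have "E = M" if E: "E \<in> frakE n M r" for E
    by (rule eq_matI, insert frakE_carrier[OF E] Mc frakE_M[OF E], auto)
  ultimately show ?thesis by blast
qed

lemma tilde_ext: assumes G: "G \<in> carrier_mat k k" and c: "c \<in> carrier_vec k"
  shows "tilde (ext G c \<alpha>) = ext G c 3"
  by (rule eq_matI, insert G c, auto simp: tilde_def ext_index)

lemma base_big:
  assumes M: "M \<in> frakC n (Suc k)" and td: "det (tilde M) > 0"
  shows "det M > (n-3) * det (lead M)"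
proof -
  have ME: "M \<in> frakE n M (Suc k)" using M unfolding frakE_def by auto
  have Mc: "M \<in> carrier_mat (Suc k) (Suc k)" by (rule frakE_carrier[OF ME])
  define G where "G = lead M"
  define c where "c = lastc M"
  have Gc: "G \<in> carrier_mat k k" unfolding G_def using Mc by simp
  have cc: "c \<in> carrier_vec k" unfolding c_def using Mc by simp
  have Md: "M = ext G c n" unfolding G_def c_def by (rule frakE_decomp[OF ME])
  have Td: "tilde M = ext G c 3" unfolding Md by (rule tilde_ext[OF Gc cc])
  have PM: "pdr (Suc k) (R M)" by (rule frakE_pdr[OF ME])
  have PG: "pdr k (R G)" unfolding G_def R_lead[OF Mc] by (rule pdr_lead[OF PM])
  have Rcc: "RV c \<in> carrier_vec k" using cc by simp
  obtain y where y: "y \<in> carrier_vec k" "R G *\<^sub>v y = RV c" using pdr_solve[OF PG Rcc] by blast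
  have RGc: "R G \<in> carrier_mat k k" using Gc by simp
  have d1: "det (R M) = det (R G) * (real_of_int n - RV c \<bullet> y)"
    unfolding Md R_ext[OF Gc cc] by (rule det_ext[OF RGc y])
  have d2: "det (R (tilde M)) = det (R G) * (3 - RV c \<bullet> y)"
    unfolding Td R_ext[OF Gc cc] using det_ext[OF RGc y] by simp
  have "det (R M) - det (R (tilde M)) = (real_of_int n - 3) * det (R G)"
    unfolding d1 d2 by (simp add: algebra_simps)
  hence "real_of_int (det M - det (tilde M)) = real_of_int ((n - 3) * det G)" unfolding det_R by simp
  hence "det M - det (tilde M) = (n-3) * det G" by (simp only: of_int_eq_iff)
  thus ?thesis using td unfolding G_def by simp
qed

lemma growth:
  assumes n4: "n mod 4 = 3" and n3: "n > 3" and M: "M \<in> frakC n r" and r1: "1 \<le> r"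
    and td: "det (tilde M) > 0"
  shows "frakE n M (r + d) \<noteq> {} \<and> (\<exists>F \<in> frakE n M (r + d). det F = opt n M (r + d) \<and> det F > (n-3) * det (lead F))
     \<and> frakE n M (Suc (r + d)) \<noteq> {} \<and> opt n M (Suc (r + d)) > (n-3) * opt n M (r + d)"
proof (induction d)
  have dM: "dim_row M = r" using frakC_carrier[OF M] by simp
  have fin: "\<And>t. finite (frakE n M t)" using frakE_finite n3 by simp
  have step: "frakE n M (Suc (r + d)) \<noteq> {} \<and> opt n M (Suc (r + d)) > (n-3) * opt n M (r + d)"
    if F: "F \<in> frakE n M (r + d)" "det F = opt n M (r + d)" "det F > (n-3) * det (lead F)" for d F
  proof -
    define k where "k = r + d - 1"
    have k: "r + d = Suc k" using r1 unfolding k_def by simp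
    have rk: "dim_row M \<le> Suc k" using dM k by simp
    from copy_ext[OF n4 n3 F(1)[unfolded k] rk F(3)]
    obtain E' where E': "E' \<in> frakE n M (Suc (Suc k))" "det E' > (n-3) * det F" by blast
    have "det E' \<le> opt n M (Suc (r + d))" unfolding opt_def using E' k fin by simp
    thus ?thesis using E' F k by auto
  qed
  case 0
  have b1: "frakE n M (r + 0) = {M}" using frakE_base[OF M] by simp
  have M': "M \<in> frakC n (Suc (r-1))" using M r1 by simp
  have b2: "det M > (n-3) * det (lead M)" using base_big[OF M' td] .
  show ?case using b1 b2 step[where d=0 and F=M] unfolding opt_def by auto
next
  case (Suc d)
  have dM: "dim_row M = r" using frakC_carrier[OF M] by simp
  have fin: "\<And>t. finite (frakE n M t)" using frakE_finite n3 by simp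
  obtain k where k: "r + d = k" by simp
  have ne: "frakE n M (Suc k) \<noteq> {}" and gt: "opt n M (Suc k) > (n-3) * opt n M k" using Suc.IH k by auto
  have "Max (det ` frakE n M (Suc k)) \<in> det ` frakE n M (Suc k)"
    by (rule Max_in, use fin ne in auto)
  then obtain F where F: "F \<in> frakE n M (Suc k)" "det F = opt n M (Suc k)"
    unfolding opt_def by auto
  have lF: "lead F \<in> frakE n M k" by (rule frakE_lead[OF F(1)], use dM k in simp)
  have "det (lead F) \<le> opt n M k" unfolding opt_def using lF fin by simp
  hence big: "det F > (n-3) * det (lead F)" using F(2) gt n3
    by (smt (verit) mult_left_mono)
  obtain k' where k': "Suc k = Suc k'" by simp
  have "frakE n M (Suc (Suc k)) \<noteq> {} \<and> opt n M (Suc (Suc k)) > (n-3) * opt n M (Suc k)"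
  proof -
    obtain E' where E': "E' \<in> frakE n M (Suc (Suc k))" "det E' > (n-3) * det F"
      using copy_ext[OF n4 n3 F(1) _ big] dM k by auto
    have "det E' \<le> opt n M (Suc (Suc k))" unfolding opt_def using E' fin by simp
    thus ?thesis using E' F by auto
  qed
  thus ?case using ne F big k by auto
qed


lemma RV_inj: "u \<in> carrier_vec k \<Longrightarrow> w \<in> carrier_vec k \<Longrightarrow> RV u = RV w \<Longrightarrow> u = w"
proof -
  assume u: "u \<in> carrier_vec k" and w: "w \<in> carrier_vec k" and h: "RV u = RV w"
  show "u = w"
  proof (rule eq_vecI)
    fix i assume "i < dim_vec w"
    hence i: "i < k" using w by simp
    have "RV u $ i = RV w $ i" using h by simp
    thus "u $ i = w $ i" using i u w by simp
  qed (use u w in simp)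
qed

lemma mat_vec_zero: "A \<in> carrier_mat n m \<Longrightarrow> A *\<^sub>v 0\<^sub>v m = (0\<^sub>v n :: 'a::comm_ring_1 vec)"
  by (intro eq_vecI, auto simp: scalar_prod_right_zero[of _ m])

lemma special:
  assumes n4: "n mod 4 = 3" and n3: "n > 3" and M: "M \<in> frakC n r" and r1: "1 \<le> r"
    and td: "det (tilde M) > 0"
    and E: "E \<in> frakE n M (Suc (Suc k))" and optE: "\<forall>E' \<in> frakE n M (Suc (Suc k)). det E' \<le> det E"
    and rk: "r \<le> k" and e3: "E $$ (k, Suc k) = 3"
  shows "\<forall>a<k. E $$ (a,k) = E $$ (a, Suc k)"
proof -
  have dM: "dim_row M = r" using frakC_carrier[OF M] by simp
  have fin: "\<And>t. finite (frakE n M t)" using frakE_finite n3 by simp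
  have Ec: "E \<in> carrier_mat (Suc (Suc k)) (Suc (Suc k))" by (rule frakE_carrier[OF E])
  define E1 where "E1 = lead E"
  have E1: "E1 \<in> frakE n M (Suc k)" unfolding E1_def by (rule frakE_lead[OF E], use dM rk in simp)
  have E1c: "E1 \<in> carrier_mat (Suc k) (Suc k)" by (rule frakE_carrier[OF E1])
  define G where "G = lead E1"
  have G: "G \<in> frakE n M k" unfolding G_def by (rule frakE_lead[OF E1], use dM rk in simp)
  have Gc: "G \<in> carrier_mat k k" by (rule frakE_carrier[OF G])
  define u where "u = lastc E1"
  have uc: "u \<in> carrier_vec k" unfolding u_def using E1c by simp
  define wf where "wf = lastc E"
  have wfc: "wf \<in> carrier_vec (Suc k)" unfolding wf_def using Ec by simp
  define w where "w = vec k (\<lambda>a. wf $ a)"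
  have wc: "w \<in> carrier_vec k" unfolding w_def by simp
  have wf3: "wf $ k = 3" unfolding wf_def using lastc_index[OF Ec, of k] e3 by simp
  have "wf = vcons w (wf $ k)" unfolding w_def by (rule vcons_split[OF wfc])
  hence wfd: "wf = vcons w 3" unfolding wf3 .
  have E1d: "E1 = ext G u n" unfolding G_def u_def by (rule frakE_decomp[OF E1])
  have Ed0: "E = ext E1 wf n" unfolding E1_def wf_def by (rule frakE_decomp[OF E])
  have Ed: "E = ext (ext G u n) (vcons w 3) n" using Ed0 E1d wfd by simp
  have ua: "u $ a = E $$ (a,k)" if "a < k" for a
    unfolding u_def using that lastc_index[OF E1c, of a] E1c Ec unfolding E1_def
    by (simp add: lead_index)
  have wa: "w $ a = E $$ (a, Suc k)" if "a < k" for a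
    unfolding w_def wf_def using that lastc_index[OF Ec, of a] by simp
  have wmod: "w $ a mod 4 = n mod 4" if "a < k" for a using wa[OF that] frakE_mod[OF E, of a "Suc k"] that by simp
  have umod: "u $ a mod 4 = n mod 4" if "a < k" for a using ua[OF that] frakE_mod[OF E, of a k] that by simp
  have uw: "u = w"
  proof (rule ccontr)
    assume neq: "u \<noteq> w"
    have PG: "pdr k (R G)" by (rule frakE_pdr[OF G])
    have RGc: "R G \<in> carrier_mat k k" using Gc by simp
    have TG: "(R G)\<^sup>T = R G" using PG unfolding pdr_def by simp
    have Ruc: "RV u \<in> carrier_vec k" and Rwc: "RV w \<in> carrier_vec k" using uc wc by auto
    obtain hu where hu: "hu \<in> carrier_vec k" "R G *\<^sub>v hu = RV u" using pdr_solve[OF PG Ruc] by blast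
    obtain hw where hw: "hw \<in> carrier_vec k" "R G *\<^sub>v hw = RV w" using pdr_solve[OF PG Rwc] by blast
    define a where "a = RV u \<bullet> hu"
    define b where "b = RV w \<bullet> hw"
    define c where "c = RV u \<bullet> hw"
    define N where "N = real_of_int n"
    define p where "p = N - a"
    define q where "q = N - b"
    define s where "s = N - 3"
    define dG where "dG = det (R G)"
    have dGp: "dG > 0" unfolding dG_def by (rule pdr_det_pos[OF PG])
    have RE1: "R E1 = ext (R G) (RV u) N" unfolding E1d N_def by (rule R_ext[OF Gc uc])
    have dE1: "det (R E1) = dG * p" unfolding RE1 dG_def p_def a_def by (rule det_ext[OF RGc hu])
    have "det (R E1) > 0" by (rule pdr_det_pos[OF frakE_pdr[OF E1]])
    hence "dG * p > 0" using dE1 by linarith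
    hence pp: "p > 0" using dGp by (simp add: zero_less_mult_iff)
    have vw: "vcons w 3 \<in> carrier_vec (Suc k)" "vcons u 3 \<in> carrier_vec (Suc k)" using wc uc by auto
    have extc: "ext G u n \<in> carrier_mat (Suc k) (Suc k)" "ext G w n \<in> carrier_mat (Suc k) (Suc k)" using Gc by auto
    have RE: "R E = ext (ext (R G) (RV u) N) (vcons (RV w) 3) N"
      unfolding Ed R_ext[OF extc(1) vw(1)] R_ext[OF Gc uc] R_vcons N_def by simp
    have D: "det (R E) = dG * (p * (N - b) - (3 - c)^2)"
      unfolding RE dG_def b_def c_def by (rule det_ext2[OF RGc TG hu hw p_def[unfolded a_def]], use pp in simp)
    have "det (R E) > 0" by (rule pdr_det_pos[OF frakE_pdr[OF E]])
    hence "dG * (p * q - (3 - c)^2) > 0" using D unfolding q_def by linarith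
    hence Dp: "p * q - (3 - c)^2 > 0" using dGp by (simp add: zero_less_mult_iff)
    hence "p * q > 0" by (smt (verit) zero_le_power2)
    hence qp: "q > 0" using pp by (simp add: zero_less_mult_iff)
    define Ei where "Ei = ext G w n"
    have REi: "R Ei = ext (R G) (RV w) N" unfolding Ei_def N_def by (rule R_ext[OF Gc wc])
    have dEi: "det (R Ei) = dG * q" unfolding REi dG_def q_def b_def by (rule det_ext[OF RGc hw])
    have PEi: "pdr (Suc k) (R Ei)" unfolding REi
      by (rule pdr_ext_det[OF PG Rwc], unfold REi[symmetric] dEi, use dGp qp in simp)
    have Ei: "Ei \<in> frakE n M (Suc k)" unfolding Ei_def
      by (rule frakE_ext[OF G _ wc wmod PEi[unfolded Ei_def]], use dM rk in simp)
    have optv: "opt n M (Suc (Suc k)) = det E" unfolding opt_def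
      by (rule Max_eqI, use fin E optE in auto)
    have kk: "Suc k = r + (Suc k - r)" using rk by simp
    have gr: "opt n M (Suc (Suc k)) > (n-3) * opt n M (Suc k)"
      using growth[OF n4 n3 M r1 td, of "Suc k - r"] kk by simp
    have "det Ei \<le> opt n M (Suc k)" unfolding opt_def using Ei fin by simp
    hence "det E > (n-3) * det Ei" using gr optv n3 by (smt (verit) mult_left_mono)
    hence "det (R E) > s * det (R Ei)" unfolding det_R s_def N_def
      by (metis of_int_less_iff of_int_mult of_int_diff of_int_numeral)
    hence "dG * (p * q - (3 - c)^2) > dG * (s * q)" unfolding D dEi q_def by (simp add: algebra_simps)
    hence "p * q - (3 - c)^2 > s * q" using dGp by simp
    hence "p * q > s * q" by (smt (verit) zero_le_power2)
    hence ps: "p > s" using qp by simp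
    define y where "y = hw + (-1) \<cdot>\<^sub>v hu"
    have yc: "y \<in> carrier_vec k" unfolding y_def using hw hu by simp
    have mhu: "(-1) \<cdot>\<^sub>v hu \<in> carrier_vec k" using hu by simp
    have Gy: "R G *\<^sub>v y = RV w + (-1) \<cdot>\<^sub>v RV u"
      unfolding y_def using mult_add_distrib_mat_vec[OF RGc hw(1) mhu] mult_mat_vec[OF RGc hu(1)] hu hw by simp
    have yn: "y \<noteq> 0\<^sub>v k"
    proof
      assume "y = 0\<^sub>v k"
      hence "RV w + (-1) \<cdot>\<^sub>v RV u = 0\<^sub>v k" using Gy mat_vec_zero[OF RGc] by simp
      hence z: "RV w + (-1) \<cdot>\<^sub>v RV u = 0\<^sub>v k" .
      have "RV w = RV u"
      proof (rule eq_vecI)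
        fix i assume "i < dim_vec (RV u)"
        hence i: "i < k" using uc by simp
        have "(RV w + (-1) \<cdot>\<^sub>v RV u) $ i = 0" using z i by simp
        thus "RV w $ i = RV u $ i" using i uc wc by simp
      qed (use uc wc in simp)
      thus False using neq RV_inj[OF uc wc] by metis
    qed
    have Kp: "y \<bullet> (R G *\<^sub>v y) > 0" using PG yc yn unfolding pdr_def by blast
    have wu: "RV w \<bullet> hu = c"
    proof -
      have "RV w \<bullet> hu = (R G *\<^sub>v hw) \<bullet> hu" using hw by simp
      also have "\<dots> = hw \<bullet> (R G *\<^sub>v hu)" by (rule sym_scalar[OF RGc TG hw(1) hu(1)])
      also have "\<dots> = hw \<bullet> RV u" using hu by simp
      also have "\<dots> = c" unfolding c_def by (rule comm_scalar_prod[OF hw(1) Ruc])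
      finally show ?thesis .
    qed
    have mRu: "(-1) \<cdot>\<^sub>v RV u \<in> carrier_vec k" using Ruc by simp
    have "y \<bullet> (R G *\<^sub>v y) = y \<bullet> (RV w + (-1) \<cdot>\<^sub>v RV u)" unfolding Gy ..
    also have "\<dots> = hw \<bullet> (RV w + (-1) \<cdot>\<^sub>v RV u) + ((-1) \<cdot>\<^sub>v hu) \<bullet> (RV w + (-1) \<cdot>\<^sub>v RV u)"
      unfolding y_def by (rule add_scalar_prod_distrib[OF hw(1) mhu], use Rwc mRu in simp)
    also have "\<dots> = (hw \<bullet> RV w - hw \<bullet> RV u) - (hu \<bullet> RV w - hu \<bullet> RV u)"
      using scalar_prod_add_distrib[OF hw(1) Rwc mRu] scalar_prod_add_distrib[OF hu(1) Rwc mRu]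
        smult_scalar_prod_distrib[OF hu(1) add_carrier_vec[OF Rwc mRu]]
        scalar_prod_smult_distrib[OF hw(1) Ruc] scalar_prod_smult_distrib[OF hu(1) Ruc] by simp
    also have "hw \<bullet> RV w = b" unfolding b_def by (rule comm_scalar_prod[OF hw(1) Rwc])
    also have "hw \<bullet> RV u = c" unfolding c_def by (rule comm_scalar_prod[OF hw(1) Ruc])
    also have "hu \<bullet> RV w = c" using wu comm_scalar_prod[OF hu(1) Rwc] by simp
    also have "hu \<bullet> RV u = a" unfolding a_def by (rule comm_scalar_prod[OF hu(1) Ruc])
    finally have K: "a + b - 2 * c > 0" using Kp by simp
    define E1' where "E1' = ext E1 (vcons u 3) n"
    define E2' where "E2' = ext Ei (vcons w 3) n"
    have RE1': "R E1' = ext (ext (R G) (RV u) N) (vcons (RV u) 3) N"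
      unfolding E1'_def R_ext[OF E1c vw(2)] RE1 R_vcons N_def by simp
    have RE2': "R E2' = ext (ext (R G) (RV w) N) (vcons (RV w) 3) N"
      unfolding E2'_def Ei_def R_ext[OF extc(2) vw(1)] REi[unfolded Ei_def] R_vcons N_def by simp
    have d1: "det (R E1') = dG * (p * (N - a) - (3 - a)^2)"
      unfolding RE1' dG_def a_def by (rule det_ext2[OF RGc TG hu hu p_def[unfolded a_def]], use pp in simp)
    have d2: "det (R E2') = dG * (q * (N - b) - (3 - b)^2)"
      unfolding RE2' dG_def b_def by (rule det_ext2[OF RGc TG hw hw q_def[unfolded b_def]], use qp in simp)
    have ident: "2 * det (R E) - (det (R E1') + det (R E2')) = 2 * dG * (- (p - s) * (a + b - 2 * c) - (c - a)^2)"
      unfolding D d1 d2 p_def q_def s_def by (simp add: algebra_simps power2_eq_square)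
    have "(p - s) * (a + b - 2 * c) > 0" using ps K by simp
    moreover have "- (p - s) * (a + b - 2 * c) = - ((p - s) * (a + b - 2 * c))" by (rule minus_mult_left[symmetric])
    moreover have "(c - a)^2 \<ge> 0" by simp
    ultimately have "- (p - s) * (a + b - 2 * c) - (c - a)^2 < 0" by linarith
    hence "2 * dG * (- (p - s) * (a + b - 2 * c) - (c - a)^2) < 0" using dGp by (simp add: mult_pos_neg)
    hence lt: "det (R E1') + det (R E2') > 2 * det (R E)" using ident by simp
    have DE: "det (R E) > 0" by (rule pdr_det_pos[OF frakE_pdr[OF E]])
    show False
    proof (cases "det (R E1') > det (R E)")
      case True
      have P: "pdr (Suc (Suc k)) (R E1')" unfolding E1'_def R_ext[OF E1c vw(2)]
        by (rule pdr_ext_det[OF frakE_pdr[OF E1]], use uc in simp,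
            use True DE in \<open>simp add: E1'_def R_ext[OF E1c vw(2)]\<close>)
      have mem: "E1' \<in> frakE n M (Suc (Suc k))" unfolding E1'_def
      proof (rule frakE_ext[OF E1 _ vw(2)])
        show "dim_row M \<le> Suc k" using dM rk by simp
        fix a assume "a < Suc k"
        thus "vcons u 3 $ a mod 4 = n mod 4" using umod uc n4 by (auto simp: vcons_def less_Suc_eq)
      next
        show "pdr (Suc (Suc k)) (R (ext E1 (vcons u 3) n))" using P unfolding E1'_def .
      qed
      have "det E1' \<le> det E" using optE mem by blast
      hence "det (R E1') \<le> det (R E)" unfolding det_R by simp
      thus False using True by simp
    next
      case False
      hence True2: "det (R E2') > det (R E)" using lt by simp
      have Eic: "Ei \<in> carrier_mat (Suc k) (Suc k)" using frakE_carrier[OF Ei] .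
      have P: "pdr (Suc (Suc k)) (R E2')" unfolding E2'_def R_ext[OF Eic vw(1)]
        by (rule pdr_ext_det[OF frakE_pdr[OF Ei]], use wc in simp,
            use True2 DE in \<open>simp add: E2'_def R_ext[OF Eic vw(1)]\<close>)
      have mem: "E2' \<in> frakE n M (Suc (Suc k))" unfolding E2'_def
      proof (rule frakE_ext[OF Ei _ vw(1)])
        show "dim_row M \<le> Suc k" using dM rk by simp
        fix a assume "a < Suc k"
        thus "vcons w 3 $ a mod 4 = n mod 4" using wmod wc n4 by (auto simp: vcons_def less_Suc_eq)
      next
        show "pdr (Suc (Suc k)) (R (ext Ei (vcons w 3) n))" using P unfolding E2'_def .
      qed
      have "det E2' \<le> det E" using optE mem by blast
      hence "det (R E2') \<le> det (R E)" unfolding det_R by simp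
      thus False using True2 by simp
    qed
  qed
  show ?thesis using ua wa uw by simp
qed


section \<open>Permutations\<close>

definition pmat :: "(nat \<Rightarrow> nat) \<Rightarrow> nat \<Rightarrow> 'a mat \<Rightarrow> 'a mat" where
  "pmat \<pi> m A = mat m m (\<lambda>(a,b). A $$ (\<pi> a, \<pi> b))"

lemma pmat_carrier[simp]: "pmat \<pi> m A \<in> carrier_mat m m" by (simp add: pmat_def)

lemma pmat_index: "a < m \<Longrightarrow> b < m \<Longrightarrow> pmat \<pi> m A $$ (a,b) = A $$ (\<pi> a, \<pi> b)"
  by (simp add: pmat_def)

lemma R_pmat: "R (pmat \<pi> m A) = pmat \<pi> m (R A)" if "\<pi> permutes {0..<m}" "A \<in> carrier_mat m m"
  by (rule eq_matI, insert that, auto simp: pmat_def permutes_in_image)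

lemma det_pmat:
  fixes A :: "'a::comm_ring_1 mat"
  assumes A: "A \<in> carrier_mat m m" and p: "\<pi> permutes {0..<m}"
  shows "det (pmat \<pi> m A) = det A"
proof -
  define R1 where "R1 = mat m m (\<lambda>(a,b). A $$ (\<pi> a, b))"
  have R1c: "R1 \<in> carrier_mat m m" unfolding R1_def by simp
  have d1: "det R1 = of_int (sign \<pi>) * det A" unfolding R1_def by (rule det_permute_rows[OF A p])
  have eq: "(pmat \<pi> m A)\<^sup>T = mat m m (\<lambda>(a,b). R1\<^sup>T $$ (\<pi> a, b))"
    by (rule eq_matI, insert p, auto simp: pmat_def R1_def permutes_in_image)
  have "det ((pmat \<pi> m A)\<^sup>T) = of_int (sign \<pi>) * det (R1\<^sup>T)"
    unfolding eq by (rule det_permute_rows[OF _ p], use R1c in simp)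
  also have "det (R1\<^sup>T) = det R1" by (rule det_transpose[OF R1c])
  finally have "det ((pmat \<pi> m A)\<^sup>T) = (of_int (sign \<pi>) * of_int (sign \<pi>)) * det A" unfolding d1 by (simp add: mult.assoc)
  moreover have "of_int (sign \<pi>) * of_int (sign \<pi>) = (1::'a)" by (metis of_int_mult sign_idempotent of_int_1)
  ultimately have "det ((pmat \<pi> m A)\<^sup>T) = det A" by simp
  thus ?thesis using det_transpose[OF pmat_carrier[of \<pi> m A]] by simp
qed

lemma pdr_pmat:
  assumes A: "pdr m A" and p: "\<pi> permutes {0..<m}"
  shows "pdr m (pmat \<pi> m A)"
proof -
  have Ac: "A \<in> carrier_mat m m" using A unfolding pdr_def by simp
  have pm: "\<And>a. a < m \<Longrightarrow> \<pi> a < m" using p by (simp add: permutes_in_image)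
  have T: "(pmat \<pi> m A)\<^sup>T = pmat \<pi> m A"
    by (rule eq_matI, auto simp: pmat_def intro!: pdr_sym[OF A] pm)
  have P: "x \<bullet> (pmat \<pi> m A *\<^sub>v x) > 0" if x: "x \<in> carrier_vec m" "x \<noteq> 0\<^sub>v m" for x
  proof -
    define x' where "x' = vec m (\<lambda>c. x $ (inv_into UNIV \<pi> c))"
    have x'c: "x' \<in> carrier_vec m" unfolding x'_def by simp
    have ip: "\<And>a. inv_into UNIV \<pi> (\<pi> a) = a" using permutes_inverses(2)[OF p] .
    have x'n: "x' \<noteq> 0\<^sub>v m"
    proof
      assume z: "x' = 0\<^sub>v m"
      have "x = 0\<^sub>v m"
      proof (rule eq_vecI)
        fix i assume "i < dim_vec (0\<^sub>v m :: real vec)"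
        hence i: "i < m" by simp
        have "x' $ (\<pi> i) = 0" using z pm[OF i] by simp
        thus "x $ i = 0\<^sub>v m $ i" unfolding x'_def using pm[OF i] i ip by simp
      qed (use x in simp)
      thus False using x by simp
    qed
    have pos: "x' \<bullet> (A *\<^sub>v x') > 0" using A x'c x'n unfolding pdr_def by blast
    have e1: "x \<bullet> (pmat \<pi> m A *\<^sub>v x) = (\<Sum>a\<in>{0..<m}. x $ a * (\<Sum>b\<in>{0..<m}. A $$ (\<pi> a, \<pi> b) * x $ b))"
      using x unfolding scalar_prod_def
      by (auto simp: pmat_def row_def scalar_prod_def intro!: sum.cong)
    have e2: "x' \<bullet> (A *\<^sub>v x') = (\<Sum>c\<in>{0..<m}. x $ (inv_into UNIV \<pi> c) * (\<Sum>d\<in>{0..<m}. A $$ (c, d) * x $ (inv_into UNIV \<pi> d)))"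
      using Ac unfolding x'_def by (auto simp: row_def scalar_prod_def intro!: sum.cong)
    also have "\<dots> = (\<Sum>a\<in>{0..<m}. x $ a * (\<Sum>d\<in>{0..<m}. A $$ (\<pi> a, d) * x $ (inv_into UNIV \<pi> d)))"
      by (subst sum.permute[OF p], simp add: ip)
    also have "\<dots> = (\<Sum>a\<in>{0..<m}. x $ a * (\<Sum>b\<in>{0..<m}. A $$ (\<pi> a, \<pi> b) * x $ b))"
      by (rule sum.cong, simp, subst sum.permute[OF p], simp add: ip)
    finally show ?thesis using pos e1 by simp
  qed
  show ?thesis unfolding pdr_def using T P by simp
qed

lemma frakE_pmat:
  assumes E: "E \<in> frakE n M m" and p: "\<pi> permutes {0..<m}" and fx: "\<And>a. a < dim_row M \<Longrightarrow> \<pi> a = a"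
    and r: "dim_row M \<le> m"
  shows "pmat \<pi> m E \<in> frakE n M m"
proof -
  have Ec: "E \<in> carrier_mat m m" by (rule frakE_carrier[OF E])
  have pm: "\<And>a. a < m \<Longrightarrow> \<pi> a < m" using p by (simp add: permutes_in_image)
  have P: "pdr m (R (pmat \<pi> m E))" unfolding R_pmat[OF p Ec] by (rule pdr_pmat[OF frakE_pdr[OF E] p])
  show ?thesis using P pm fx r frakE_diag[OF E] frakE_mod[OF E] frakE_M[OF E]
    unfolding frakE_def frakC_def pos_def_int_iff by (auto simp: pmat_index)
qed


theorem theorem9:
  fixes n :: int and r m :: nat and M E :: "int mat" and i j :: nat
  assumes "n mod 4 = 3" and "n > 3"
    and "1 \<le> r" and "r \<le> m"
    and "M \<in> frakC n r"
    and "det (tilde M) > 0"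
    and "E \<in> frakE n M m"
    and "\<forall>E' \<in> frakE n M m. det E' \<le> det E"
    and "i < m - r" and "j < m - r" and "i \<noteq> j"
    and "E $$ (r + i, r + j) = 3"
  shows "(\<forall>k<r. E $$ (k, r + i) = E $$ (k, r + j)) \<and>
         (\<forall>k<m - r. k \<noteq> i \<and> k \<noteq> j \<longrightarrow> E $$ (r + k, r + i) = E $$ (r + k, r + j))"
proof -
  note n4 = assms(1) and n3 = assms(2) and r1 = assms(3) and rm = assms(4) and M = assms(5)
    and td = assms(6) and E = assms(7) and optE = assms(8) and ii = assms(9) and jj = assms(10)
    and ij = assms(11) and e3 = assms(12)
  have dM: "dim_row M = r" using frakC_carrier[OF M] by simp
  define i' where "i' = r + i"
  define j' where "j' = r + j"
  have i'm: "i' < m" and j'm: "j' < m" and i'j': "i' \<noteq> j'" and ri': "r \<le> i'" and rj': "r \<le> j'"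
    using ii jj ij unfolding i'_def j'_def by auto
  have m2: "r + 2 \<le> m" using ii jj ij by linarith
  define kk where "kk = m - 2"
  have mk: "m = Suc (Suc kk)" unfolding kk_def using m2 by simp
  have rk: "r \<le> kk" unfolding kk_def using m2 by simp
  define \<sigma>1 where "\<sigma>1 = Transposition.transpose (m-1) j'"
  define i'' where "i'' = \<sigma>1 i'"
  define \<sigma>2 where "\<sigma>2 = Transposition.transpose (m-2) i''"
  define \<pi> where "\<pi> = \<sigma>1 \<circ> \<sigma>2"
  have i''m: "i'' < m" and ri'': "r \<le> i''" and i''n: "i'' \<noteq> m - 1"
    using i'm j'm ri' rj' i'j' m2 unfolding i''_def \<sigma>1_def by (auto simp: Transposition.transpose_def)
  have p1: "\<sigma>1 permutes {0..<m}" unfolding \<sigma>1_def by (rule permutes_swap_id, use j'm m2 in auto)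
  have p2: "\<sigma>2 permutes {0..<m}" unfolding \<sigma>2_def by (rule permutes_swap_id, use i''m m2 in auto)
  have p: "\<pi> permutes {0..<m}" unfolding \<pi>_def by (rule permutes_compose[OF p2 p1])
  have \<pi>k: "\<pi> kk = i'" unfolding \<pi>_def \<sigma>2_def i''_def \<sigma>1_def kk_def by simp
  have \<pi>k1: "\<pi> (Suc kk) = j'"
  proof -
    have "Suc kk = m - 1" using mk by simp
    moreover have "\<sigma>2 (m - 1) = m - 1" unfolding \<sigma>2_def using i''n m2 by (auto simp: Transposition.transpose_def)
    ultimately show ?thesis unfolding \<pi>_def \<sigma>1_def by simp
  qed
  have \<pi>fix: "\<pi> a = a" if a: "a < dim_row M" for a
  proof -
    have ar: "a < r" using a dM by simp
    have "\<sigma>2 a = a" unfolding \<sigma>2_def using ar ri'' m2 by (auto simp: Transposition.transpose_def)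
    moreover have "\<sigma>1 a = a" unfolding \<sigma>1_def using ar rj' m2 by (auto simp: Transposition.transpose_def)
    ultimately show ?thesis unfolding \<pi>_def by simp
  qed
  define P where "P = pmat \<pi> m E"
  have Ec: "E \<in> carrier_mat m m" by (rule frakE_carrier[OF E])
  have dMm: "dim_row M \<le> m" using dM assms(4) by simp
  have PE: "P \<in> frakE n M m" unfolding P_def by (rule frakE_pmat[OF E p \<pi>fix dMm])
  have dP: "det P = det E" unfolding P_def by (rule det_pmat[OF Ec p])
  have optP: "\<forall>E' \<in> frakE n M (Suc (Suc kk)). det E' \<le> det P" using optE dP mk by simp
  have P3: "P $$ (kk, Suc kk) = 3" unfolding P_def using mk \<pi>k \<pi>k1 e3 i'_def j'_def by (simp add: pmat_index)
  have sp: "\<forall>a<kk. P $$ (a,kk) = P $$ (a, Suc kk)"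
    by (rule special[OF n4 n3 M r1 td PE[unfolded mk] optP rk P3])
  have key: "E $$ (a, i') = E $$ (a, j')" if a: "a < m" "a \<noteq> i'" "a \<noteq> j'" for a
  proof -
    define b where "b = inv_into UNIV \<pi> a"
    have \<pi>b: "\<pi> b = a" unfolding b_def using permutes_inverses(1)[OF p] .
    have bm: "b < m" using p a(1) \<pi>b by (metis atLeastLessThan_iff permutes_in_image zero_le)
    have bk: "b \<noteq> kk" using \<pi>b \<pi>k a by auto
    have bk1: "b \<noteq> Suc kk" using \<pi>b \<pi>k1 a by auto
    have "b < kk" using bm bk bk1 mk by linarith
    hence "P $$ (b,kk) = P $$ (b, Suc kk)" using sp by simp
    thus ?thesis unfolding P_def using bm mk \<pi>b \<pi>k \<pi>k1 by (simp add: pmat_index)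
  qed
  show ?thesis
  proof (intro conjI allI impI)
    fix k assume "k < r"
    thus "E $$ (k, r + i) = E $$ (k, r + j)" using key[of k] ri' rj' rm unfolding i'_def j'_def by simp
  next
    fix k assume "k < m - r" "k \<noteq> i \<and> k \<noteq> j"
    thus "E $$ (r + k, r + i) = E $$ (r + k, r + j)" using key[of "r + k"] unfolding i'_def j'_def by simp
  qed
qed

end
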